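(* Consider a hybrid market scheme (companies $c$ buy directly at the auction, companies $b$ through intermediaries) and a tax scheme, with $\tau,\lambda,A$ chosen such that the aggregate emissions are identical across all schemes (equal to $A$), and assume $$\Big[\max_b\frac{\mathrm{E}^{\mathrm{bau}}_b}{\varrho_b}-2\lambda\Big]\Big(\sum_c\varrho_c+\tfrac12\sum_b\varrho_b\Big)+\sum_c\mathrm{E}^{\mathrm{bau}}_c+\tfrac12\sum_b\mathrm{E}^{\mathrm{bau}}_b\le A<\sum_c\mathrm{E}^{\mathrm{bau}}_c+\sum_b\Big[\tfrac{\mathrm{E}^{\mathrm{bau}}_b}{2}\vee(\mathrm{E}^{\mathrm{bau}}_b-\lambda\varrho_b)\Big].$$ Then: (Tax) $\tau=(\mathrm{E}^{\mathrm{bau}}-A)/\varrho$; $\mathcal{W}^{\mathrm{tax}}_{\mathrm{C},i}=\mathcal{W}^{\mathrm{bau}}_{\mathrm{C},i}-\tau(\mathrm{E}^{\mathrm{bau}}_i-\tfrac\tau2\varrho_i)$ for every company $i$; $\mathcal{W}^{\mathrm{tax}}_{\mathrm{C}}=\mathcal{W}^{\mathrm{bau}}_{\mathrm{C}}-\tau(\mathrm{E}^{\mathrm{bau}}-\tfrac\tau2\varrho)$ and $\mathcal{W}^{\mathrm{tax}}_{\mathrm{R}}=\tau A$. (Market) For each $c$: $\bm{P_c}(\bm S)=\bm S=\dfrac{2\varrho\tau-\sum_b\mathrm{E}^{\mathrm{bau}}_b}{2\varrho-\sum_b\varrho_b}$ and $\mathcal{W}^{\mathrm{mar}}_{\mathrm{C},c}=\mathcal{W}^{\mathrm{tax}}_{\mathrm{C},c}+\dfrac{\mathrm{E}^{\mathrm{tax}}_c+\mathrm{E}^{\mathrm{mar}}_c}{2\varrho}\sum_b\mathrm{E}^{\mathrm{mar}}_b$.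 For each $b$: $\bm{P_b}(\bm S)=\tfrac\tau2+\tfrac12\big(\tfrac{\mathrm{E}^{\mathrm{bau}}_b}{\varrho_b}-\tfrac1\varrho\sum_\beta\mathrm{E}^{\mathrm{mar}}_\beta\big)$, $\mathcal{W}^{\mathrm{mar}}_{\mathrm{F},b}=(\mathrm{E}^{\mathrm{mar}}_b)^2/\varrho_b$ and $$\mathcal{W}^{\mathrm{mar}}_{\mathrm{C},b}=\mathcal{W}^{\mathrm{tax}}_{\mathrm{C},b}+\frac{\mathrm{E}^{\mathrm{tax}}_b+\mathrm{E}^{\mathrm{mar}}_b}{2\varrho}\sum_\beta\mathrm{E}^{\mathrm{mar}}_\beta-\frac32\mathcal{W}^{\mathrm{mar}}_{\mathrm{F},b}+\frac{\mathrm{E}^{\mathrm{mar}}_b}{2\varrho}\sum_\beta\mathrm{E}^{\mathrm{mar}}_\beta,$$ where $\beta$ runs over the companies buying through intermediaries. Aggregates: $\mathcal{W}^{\mathrm{mar}}_{\mathrm{F}}=\sum_b(\mathrm{E}^{\mathrm{mar}}_b)^2/\varrho_b$, $\mathcal{W}^{\mathrm{mar}}_{\mathrm{C}}=\mathcal{W}^{\mathrm{tax}}_{\mathrm{C}}-\tfrac32\mathcal{W}^{\mathrm{mar}}_{\mathrm{F}}+\tfrac A\varrho\sum_b\mathrm{E}^{\mathrm{mar}}_b+\tfrac{(\sum_b\mathrm{E}^{\mathrm{mar}}_b)^2}{2\varrho}$, $\mathcal{W}^{\mathrm{mar}}_{\mathrm{R}}=\mathcal{W}^{\mathrm{tax}}_{\mathrm{R}}-\tfrac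 A\varrho\sum_b\mathrm{E}^{\mathrm{mar}}_b$.
   Context: Each company $i$ (of either type) has $\pi^0_i,\pi^1_i,\gamma_i>0$, raw wealth $\pi_i(q)=\pi^0_iq-\tfrac{\pi^1_i}2q^2$, emissions $e^{-a}q$ with green cost $\tfrac{\gamma_i}2[(1-e^{-a})q]^2$; $\mathrm{E}^{\mathrm{bau}}_i=\pi^0_i/\pi^1_i$, $\mathcal{W}^{\mathrm{bau}}_{\mathrm{C},i}=(\pi^0_i)^2/(2\pi^1_i)$, $\varrho_i=1/\pi^1_i+1/\gamma_i$; aggregates (no index) are sums over all companies; standing assumption $\tau\varrho_i<\mathrm{E}^{\mathrm{bau}}_i$, $\lambda\varrho_i<\mathrm{E}^{\mathrm{bau}}_i$. Tax: company maximizes $\pi_i(q)-c_i(q,a)-\tau e^{-a}q$; emissions $\mathrm{E}^{\mathrm{tax}}_i$, optimal wealth $\mathcal{W}^{\mathrm{tax}}_{\mathrm{C},i}$; regulator earns $\mathcal{W}^{\mathrm{tax}}_{\mathrm{R}}=\tau\sum_i\mathrm{E}^{\mathrm{tax}}_i$. Market: company facing price $P$ maximizes $\pi_i(q)-c_i(q,a)-\delta P-\lambda(e^{-a}q-\delta)^+$, with demand $\bm{\delta_i}(P)=\mathrm{E}^{\mathrm{bau}}_i-P\varrho_i$, emissions $\mathrm{E}^{\mathrm{mar}}_i$ and wealth $\mathcal{W}^{\mathrm{mar}}_{\mathrm{C},i}$. Direct buyers face $\bm{P_c}(S)=S$; intermediary of $b$ buys at $S$, sets $\bm{P_b}(S)=\arg\max_{P\in[S,\lambda]}\bm{\delta_b}(P)(P-S)$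 and earns $\mathcal{W}^{\mathrm{mar}}_{\mathrm{F},b}=\bm{\delta_b}(\bm{P_b})(\bm{P_b}-S)$. Equilibrium $\bm S$ solves $A=\sum_c\bm{\delta_c}(\bm S)+\sum_b\bm{\delta_b}(\bm{P_b}(\bm S))$. Regulator earns $\mathcal{W}^{\mathrm{mar}}_{\mathrm{R}}=\lambda\sum_i(\mathrm{E}^{\mathrm{mar}}_i-\bm{\delta_i})^++\bm SA$. $x\vee y=\max(x,y)$. *)

theory Defs
  imports Complex_Main
begin

text \<open>Company parameters are given as functions of the company index:
  p0 i = pi^0_i, p1 i = pi^1_i, g i = gamma_i.\<close>

definition Ebau :: "('i \<Rightarrow> real) \<Rightarrow> ('i \<Rightarrow> real) \<Rightarrow> 'i \<Rightarrow> real" where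
  "Ebau p0 p1 i = p0 i / p1 i"

definition WbauC :: "('i \<Rightarrow> real) \<Rightarrow> ('i \<Rightarrow> real) \<Rightarrow> 'i \<Rightarrow> real" where
  "WbauC p0 p1 i = (p0 i)^2 / (2 * p1 i)"

definition rho :: "('i \<Rightarrow> real) \<Rightarrow> ('i \<Rightarrow> real) \<Rightarrow> 'i \<Rightarrow> real" where
  "rho p1 g i = 1 / p1 i + 1 / g i"

definition raw_wealth :: "('i \<Rightarrow> real) \<Rightarrow> ('i \<Rightarrow> real) \<Rightarrow> 'i \<Rightarrow> real \<Rightarrow> real" where
  "raw_wealth p0 p1 i q = p0 i * q - p1 i / 2 * q^2"

definition green_cost :: "('i \<Rightarrow> real) \<Rightarrow> 'i \<Rightarrow> real \<Rightarrow> real \<Rightarrow> real" where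
  "green_cost g i q a = g i / 2 * ((1 - exp (- a)) * q)^2"

text \<open>Tax scheme: company i maximizes over production q >= 0 and abatement a >= 0.\<close>
definition tax_obj :: "('i \<Rightarrow> real) \<Rightarrow> ('i \<Rightarrow> real) \<Rightarrow> ('i \<Rightarrow> real) \<Rightarrow> real \<Rightarrow> 'i \<Rightarrow> real \<Rightarrow> real \<Rightarrow> real" where
  "tax_obj p0 p1 g tau i q a = raw_wealth p0 p1 i q - green_cost g i q a - tau * exp (- a) * q"

definition tax_opt :: "('i \<Rightarrow> real) \<Rightarrow> ('i \<Rightarrow> real) \<Rightarrow> ('i \<Rightarrow> real) \<Rightarrow> real \<Rightarrow> 'i \<Rightarrow> real \<Rightarrow> real \<Rightarrow> bool" where
  "tax_opt p0 p1 g tau i q a \<longleftrightarrow> 0 \<le> q \<and> 0 \<le> a \<and>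
     (\<forall>q' a'. 0 \<le> q' \<and> 0 \<le> a' \<longrightarrow> tax_obj p0 p1 g tau i q' a' \<le> tax_obj p0 p1 g tau i q a)"

definition Etax :: "('i \<Rightarrow> real) \<Rightarrow> ('i \<Rightarrow> real) \<Rightarrow> ('i \<Rightarrow> real) \<Rightarrow> real \<Rightarrow> 'i \<Rightarrow> real" where
  "Etax p0 p1 g tau i = (THE e. \<exists>q a. tax_opt p0 p1 g tau i q a \<and> e = exp (- a) * q)"

definition WtaxC :: "('i \<Rightarrow> real) \<Rightarrow> ('i \<Rightarrow> real) \<Rightarrow> ('i \<Rightarrow> real) \<Rightarrow> real \<Rightarrow> 'i \<Rightarrow> real" where
  "WtaxC p0 p1 g tau i = (THE w. \<exists>q a. tax_opt p0 p1 g tau i q a \<and> w = tax_obj p0 p1 g tau i q a)"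

text \<open>Market scheme: company i facing allowance price P maximizes over q >= 0, a >= 0 and
  purchased allowances delta >= 0, with penalty lam per unit of uncovered emissions.\<close>
definition mar_obj :: "('i \<Rightarrow> real) \<Rightarrow> ('i \<Rightarrow> real) \<Rightarrow> ('i \<Rightarrow> real) \<Rightarrow> real \<Rightarrow> real \<Rightarrow> 'i \<Rightarrow> real \<Rightarrow> real \<Rightarrow> real \<Rightarrow> real" where
  "mar_obj p0 p1 g lam P i q a d = raw_wealth p0 p1 i q - green_cost g i q a - d * P
      - lam * max (exp (- a) * q - d) 0"

definition mar_opt :: "('i \<Rightarrow> real) \<Rightarrow> ('i \<Rightarrow> real) \<Rightarrow> ('i \<Rightarrow> real) \<Rightarrow> real \<Rightarrow> real \<Rightarrow> 'i \<Rightarrow> real \<Rightarrow> real \<Rightarrow> real \<Rightarrow> bool" where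
  "mar_opt p0 p1 g lam P i q a d \<longleftrightarrow> 0 \<le> q \<and> 0 \<le> a \<and> 0 \<le> d \<and>
     (\<forall>q' a' d'. 0 \<le> q' \<and> 0 \<le> a' \<and> 0 \<le> d' \<longrightarrow>
        mar_obj p0 p1 g lam P i q' a' d' \<le> mar_obj p0 p1 g lam P i q a d)"

definition Emar :: "('i \<Rightarrow> real) \<Rightarrow> ('i \<Rightarrow> real) \<Rightarrow> ('i \<Rightarrow> real) \<Rightarrow> real \<Rightarrow> real \<Rightarrow> 'i \<Rightarrow> real" where
  "Emar p0 p1 g lam P i = (THE e. \<exists>q a d. mar_opt p0 p1 g lam P i q a d \<and> e = exp (- a) * q)"

definition WmarC :: "('i \<Rightarrow> real) \<Rightarrow> ('i \<Rightarrow> real) \<Rightarrow> ('i \<Rightarrow> real) \<Rightarrow> real \<Rightarrow> real \<Rightarrow> 'i \<Rightarrow> real" where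
  "WmarC p0 p1 g lam P i = (THE w. \<exists>q a d. mar_opt p0 p1 g lam P i q a d \<and> w = mar_obj p0 p1 g lam P i q a d)"

definition demand :: "('i \<Rightarrow> real) \<Rightarrow> ('i \<Rightarrow> real) \<Rightarrow> ('i \<Rightarrow> real) \<Rightarrow> real \<Rightarrow> 'i \<Rightarrow> real" where
  "demand p0 p1 g P i = Ebau p0 p1 i - P * rho p1 g i"

definition Pint :: "('i \<Rightarrow> real) \<Rightarrow> ('i \<Rightarrow> real) \<Rightarrow> ('i \<Rightarrow> real) \<Rightarrow> real \<Rightarrow> real \<Rightarrow> 'i \<Rightarrow> real" where
  "Pint p0 p1 g lam S b = (THE P. S \<le> P \<and> P \<le> lam \<and>
     (\<forall>P'. S \<le> P' \<and> P' \<le> lam \<longrightarrow> demand p0 p1 g P' b * (P' - S) \<le> demand p0 p1 g P b * (P - S)))"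

definition WmarF :: "('i \<Rightarrow> real) \<Rightarrow> ('i \<Rightarrow> real) \<Rightarrow> ('i \<Rightarrow> real) \<Rightarrow> real \<Rightarrow> real \<Rightarrow> 'i \<Rightarrow> real" where
  "WmarF p0 p1 g lam S b = demand p0 p1 g (Pint p0 p1 g lam S b) b * (Pint p0 p1 g lam S b - S)"

definition Pface :: "'i set \<Rightarrow> ('i \<Rightarrow> real) \<Rightarrow> ('i \<Rightarrow> real) \<Rightarrow> ('i \<Rightarrow> real) \<Rightarrow> real \<Rightarrow> real \<Rightarrow> 'i \<Rightarrow> real" where
  "Pface Bs p0 p1 g lam S i = (if i \<in> Bs then Pint p0 p1 g lam S i else S)"

definition is_equilibrium :: "'i set \<Rightarrow> 'i set \<Rightarrow> ('i \<Rightarrow> real) \<Rightarrow> ('i \<Rightarrow> real) \<Rightarrow> ('i \<Rightarrow> real) \<Rightarrow> real \<Rightarrow> real \<Rightarrow> real \<Rightarrow> bool" where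
  "is_equilibrium Cs Bs p0 p1 g lam A S \<longleftrightarrow>
     A = (\<Sum>c\<in>Cs. demand p0 p1 g S c) + (\<Sum>b\<in>Bs. demand p0 p1 g (Pint p0 p1 g lam S b) b)"

definition WtaxR :: "'i set \<Rightarrow> ('i \<Rightarrow> real) \<Rightarrow> ('i \<Rightarrow> real) \<Rightarrow> ('i \<Rightarrow> real) \<Rightarrow> real \<Rightarrow> real" where
  "WtaxR I p0 p1 g tau = tau * (\<Sum>i\<in>I. Etax p0 p1 g tau i)"

definition WmarR :: "'i set \<Rightarrow> 'i set \<Rightarrow> ('i \<Rightarrow> real) \<Rightarrow> ('i \<Rightarrow> real) \<Rightarrow> ('i \<Rightarrow> real) \<Rightarrow> real \<Rightarrow> real \<Rightarrow> real \<Rightarrow> real" where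
  "WmarR I Bs p0 p1 g lam A S =
     lam * (\<Sum>i\<in>I. max (Emar p0 p1 g lam (Pface Bs p0 p1 g lam S i) i
                         - demand p0 p1 g (Pface Bs p0 p1 g lam S i) i) 0) + S * A"

end

theory Submission
  imports Defs
begin


lemma tax_obj_id:
  assumes "p1 i > 0" "g i > 0"
  shows "tax_obj p0 p1 g tau i q a =
     ((p0 i - tau)^2/(2*p1 i) + tau^2/(2*g i))
     - p1 i/2 * (q - (p0 i - tau)/p1 i)^2 - g i/2 * ((1 - exp(-a))*q - tau/g i)^2"
  using assms unfolding tax_obj_def raw_wealth_def green_cost_def
  by (simp add: field_simps power2_eq_square)

lemma tax_pos:
  assumes p: "p0 i > 0" "p1 i > 0" "g i > 0" and t: "0 \<le> tau" "tau * rho p1 g i < Ebau p0 p1 i"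
  defines "V \<equiv> (p0 i - tau)^2/(2*p1 i) + tau^2/(2*g i)"
  shows "tax_opt p0 p1 g tau i ((p0 i - tau)/p1 i) (ln (((p0 i - tau)/p1 i) / (Ebau p0 p1 i - tau * rho p1 g i)))"
    and "\<And>q a. tax_opt p0 p1 g tau i q a \<Longrightarrow> exp(-a)*q = Ebau p0 p1 i - tau * rho p1 g i \<and> tax_obj p0 p1 g tau i q a = V"
    and "\<And>q a. tax_obj p0 p1 g tau i q a \<le> V"
    and "tax_obj p0 p1 g tau i ((p0 i - tau)/p1 i) (ln (((p0 i - tau)/p1 i) / (Ebau p0 p1 i - tau * rho p1 g i))) = V"
    and "V = WbauC p0 p1 i - tau * (Ebau p0 p1 i - tau/2 * rho p1 g i)"
proof -
  define qs where "qs = (p0 i - tau)/p1 i"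
  define xs where "xs = Ebau p0 p1 i - tau * rho p1 g i"
  define as where "as = ln (qs / xs)"
  have xs_pos: "xs > 0" using t unfolding xs_def by simp
  have qs_eq: "qs = xs + tau / g i" using p unfolding qs_def xs_def Ebau_def rho_def
    by (simp add: field_simps)
  have ys_nn: "tau / g i \<ge> 0" using t p by simp
  have qs_pos: "qs > 0" using qs_eq xs_pos ys_nn by linarith
  have e: "exp(-as) = xs/qs" unfolding as_def using qs_pos xs_pos
    by (simp add: exp_diff ln_div)
  have as_nn: "as \<ge> 0" unfolding as_def using qs_eq xs_pos ys_nn by simp
  have ex: "exp(-as) * qs = xs" using e qs_pos by simp
  have ey: "(1 - exp(-as)) * qs = tau / g i" using ex qs_eq by (simp add: algebra_simps)
  have id: "\<And>q a. tax_obj p0 p1 g tau i q a =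
     ((p0 i - tau)^2/(2*p1 i) + tau^2/(2*g i))
     - p1 i/2 * (q - (p0 i - tau)/p1 i)^2 - g i/2 * ((1 - exp(-a))*q - tau/g i)^2"
    using p(2,3) by (rule tax_obj_id)
  have le: "\<And>q a. tax_obj p0 p1 g tau i q a \<le> V"
  proof -
    fix q a
    have "p1 i/2 * (q - (p0 i - tau)/p1 i)^2 \<ge> 0" "g i/2 * ((1 - exp(-a))*q - tau/g i)^2 \<ge> 0" using p by auto
    then show "tax_obj p0 p1 g tau i q a \<le> V" unfolding V_def id[of q a] by linarith
  qed
  show "\<And>q a. tax_obj p0 p1 g tau i q a \<le> V" by (rule le)
  have at: "tax_obj p0 p1 g tau i qs as = V"
    unfolding V_def id qs_def[symmetric] ey by simp
  show "tax_obj p0 p1 g tau i ((p0 i - tau)/p1 i) (ln (((p0 i - tau)/p1 i) / (Ebau p0 p1 i - tau * rho p1 g i))) = V"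
    using at unfolding qs_def as_def xs_def .
  have opt: "tax_opt p0 p1 g tau i qs as" unfolding tax_opt_def using at le qs_pos as_nn by simp
  then show "tax_opt p0 p1 g tau i ((p0 i - tau)/p1 i) (ln (((p0 i - tau)/p1 i) / (Ebau p0 p1 i - tau * rho p1 g i)))"
    unfolding qs_def as_def xs_def .
  show "exp(-a)*q = Ebau p0 p1 i - tau * rho p1 g i \<and> tax_obj p0 p1 g tau i q a = V"
    if o: "tax_opt p0 p1 g tau i q a" for q a
  proof -
    have "tax_obj p0 p1 g tau i q a \<ge> V" using o at unfolding tax_opt_def using qs_pos as_nn by fastforce
    then have V: "tax_obj p0 p1 g tau i q a = V" using le by (meson antisym)
    then have "p1 i/2 * (q - qs)^2 + g i/2 * ((1 - exp(-a))*q - tau/g i)^2 = 0"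
      using id[of q a] unfolding qs_def V_def by simp
    moreover have "p1 i/2 * (q - qs)^2 \<ge> 0" "g i/2 * ((1 - exp(-a))*q - tau/g i)^2 \<ge> 0" using p by auto
    ultimately have "p1 i/2 * (q - qs)^2 = 0" "g i/2 * ((1 - exp(-a))*q - tau/g i)^2 = 0" by linarith+
    then have "q = qs" "(1 - exp(-a))*q = tau/g i" using p by auto
    then have "exp(-a)*q = xs" using qs_eq by (simp add: algebra_simps)
    then show ?thesis using V unfolding xs_def by simp
  qed
  show "V = WbauC p0 p1 i - tau * (Ebau p0 p1 i - tau/2 * rho p1 g i)"
    unfolding V_def WbauC_def Ebau_def rho_def using p by (simp add: field_simps power2_eq_square)
qed

lemma tax_pos_vals:
  assumes p: "p0 i > 0" "p1 i > 0" "g i > 0" and t: "0 \<le> tau" "tau * rho p1 g i < Ebau p0 p1 i"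
  shows "Etax p0 p1 g tau i = Ebau p0 p1 i - tau * rho p1 g i"
    and "WtaxC p0 p1 g tau i = WbauC p0 p1 i - tau * (Ebau p0 p1 i - tau/2 * rho p1 g i)"
proof -
  note o = tax_pos(1)[OF p t] and u = tax_pos(2)[OF p t] and v = tax_pos(5)[OF p t]
  show "Etax p0 p1 g tau i = Ebau p0 p1 i - tau * rho p1 g i"
    unfolding Etax_def
  proof (rule the_equality)
    show "\<exists>q a. tax_opt p0 p1 g tau i q a \<and> Ebau p0 p1 i - tau * rho p1 g i = exp (- a) * q"
      using o u by metis
    show "\<And>e. \<exists>q a. tax_opt p0 p1 g tau i q a \<and> e = exp (- a) * q \<Longrightarrow> e = Ebau p0 p1 i - tau * rho p1 g i"
      using u by metis
  qed
  show "WtaxC p0 p1 g tau i = WbauC p0 p1 i - tau * (Ebau p0 p1 i - tau/2 * rho p1 g i)"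
    unfolding WtaxC_def
  proof (rule the_equality)
    show "\<exists>q a. tax_opt p0 p1 g tau i q a \<and> WbauC p0 p1 i - tau * (Ebau p0 p1 i - tau/2 * rho p1 g i) = tax_obj p0 p1 g tau i q a"
      using o u v by metis
    show "\<And>w. \<exists>q a. tax_opt p0 p1 g tau i q a \<and> w = tax_obj p0 p1 g tau i q a \<Longrightarrow> w = WbauC p0 p1 i - tau * (Ebau p0 p1 i - tau/2 * rho p1 g i)"
      using u v by metis
  qed
qed

lemma tax_neg_val:
  assumes p: "p0 i > 0" "p1 i > 0" "g i > 0" and t: "tau \<le> 0"
  shows "Etax p0 p1 g tau i = Ebau p0 p1 i - tau / p1 i"
proof -
  define qs where "qs = (p0 i - tau)/p1 i"
  define V where "V = (p0 i - tau)^2/(2*p1 i)"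
  have id: "\<And>q a. tax_obj p0 p1 g tau i q a = V - p1 i/2 * (q - qs)^2 - g i/2 * ((1 - exp(-a))*q)^2
        + tau * ((1 - exp(-a))*q)"
    unfolding tax_obj_def raw_wealth_def green_cost_def V_def qs_def using p
    by (simp add: field_simps power2_eq_square)
  have qs_pos: "qs > 0" unfolding qs_def using p t by simp
  have at: "tax_obj p0 p1 g tau i qs 0 = V" unfolding id by simp
  have le: "tax_obj p0 p1 g tau i q a \<le> V" if "q \<ge> 0" "a \<ge> 0" for q a
  proof -
    have "(1 - exp(-a))*q \<ge> 0" using that by simp
    then have "tau * ((1 - exp(-a))*q) \<le> 0" using t by (simp add: mult_nonpos_nonneg)
    moreover have "p1 i/2 * (q - qs)^2 \<ge> 0" "g i/2 * ((1 - exp(-a))*q)^2 \<ge> 0" using p by auto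
    ultimately show ?thesis unfolding id by linarith
  qed
  have opt: "tax_opt p0 p1 g tau i qs 0" unfolding tax_opt_def using at le qs_pos by simp
  have u: "exp(-a)*q = qs" if o: "tax_opt p0 p1 g tau i q a" for q a
  proof -
    have qa: "q \<ge> 0" "a \<ge> 0" using o unfolding tax_opt_def by auto
    have "tax_obj p0 p1 g tau i q a \<ge> V" using o at qs_pos unfolding tax_opt_def by fastforce
    have y: "(1 - exp(-a))*q \<ge> 0" using qa by simp
    then have "tau * ((1 - exp(-a))*q) \<le> 0" using t by (simp add: mult_nonpos_nonneg)
    moreover have "p1 i/2 * (q - qs)^2 \<ge> 0" "g i/2 * ((1 - exp(-a))*q)^2 \<ge> 0" using p by auto
    ultimately have "p1 i/2 * (q - qs)^2 = 0" "g i/2 * ((1 - exp(-a))*q)^2 = 0"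
      using \<open>tax_obj p0 p1 g tau i q a \<ge> V\<close> unfolding id by linarith+
    then have "q = qs" "(1 - exp(-a))*q = 0" using p by auto
    then show ?thesis by (simp add: algebra_simps)
  qed
  have "Etax p0 p1 g tau i = qs"
    unfolding Etax_def
  proof (rule the_equality)
    show "\<exists>q a. tax_opt p0 p1 g tau i q a \<and> qs = exp (- a) * q" using opt by force
    show "\<And>e. \<exists>q a. tax_opt p0 p1 g tau i q a \<and> e = exp (- a) * q \<Longrightarrow> e = qs"
      using u by metis
  qed
  then show ?thesis unfolding qs_def Ebau_def using p by (simp add: diff_divide_distrib)
qed

lemma pen_bound:
  fixes P lam d x :: real
  assumes "0 \<le> P" "P \<le> lam" "0 \<le> d"
  shows "P * x \<le> d * P + lam * max (x - d) 0"
proof (cases "x \<ge> d")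
  case True
  have "P * (x - d) \<le> lam * (x - d)" using True assms by (simp add: mult_right_mono)
  then show ?thesis using True by (simp add: algebra_simps)
next
  case False
  have "P * x \<le> P * d" using False assms by (simp add: mult_left_mono)
  then show ?thesis using False by (simp add: algebra_simps)
qed

lemma mar_vals:
  assumes p: "p0 i > 0" "p1 i > 0" "g i > 0" and t: "0 \<le> P" "P \<le> lam" "P * rho p1 g i < Ebau p0 p1 i"
  shows "Emar p0 p1 g lam P i = Ebau p0 p1 i - P * rho p1 g i"
    and "WmarC p0 p1 g lam P i = WbauC p0 p1 i - P * (Ebau p0 p1 i - P/2 * rho p1 g i)"
proof -
  define V where "V \<equiv> (p0 i - P)^2/(2*p1 i) + P^2/(2*g i)"
  define qs where "qs = (p0 i - P)/p1 i"
  define as where "as = ln (((p0 i - P)/p1 i) / (Ebau p0 p1 i - P * rho p1 g i))"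
  define X where "X = Ebau p0 p1 i - P * rho p1 g i"
  have o: "tax_opt p0 p1 g P i qs as" using tax_pos(1)[OF p t(1,3)] unfolding qs_def as_def .
  have u: "\<And>q a. tax_opt p0 p1 g P i q a \<Longrightarrow> exp(-a)*q = X \<and> tax_obj p0 p1 g P i q a = V"
    using tax_pos(2)[OF p t(1,3)] unfolding V_def X_def by blast
  have le: "\<And>q a. tax_obj p0 p1 g P i q a \<le> V" using tax_pos(3)[OF p t(1,3)] unfolding V_def by blast
  have v: "V = WbauC p0 p1 i - P * (Ebau p0 p1 i - P/2 * rho p1 g i)" using tax_pos(5)[OF p t(1,3)] unfolding V_def .
  have mle: "mar_obj p0 p1 g lam P i q a d \<le> tax_obj p0 p1 g P i q a" if "0 \<le> d" for q a d
    using pen_bound[OF t(1,2) that, of "exp(-a)*q"] unfolding mar_obj_def tax_obj_def by (simp add: algebra_simps)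
  have meq: "mar_obj p0 p1 g lam P i q a (exp(-a)*q) = tax_obj p0 p1 g P i q a" for q a
    unfolding mar_obj_def tax_obj_def by (simp add: algebra_simps)
  have oqa: "qs \<ge> 0" "as \<ge> 0" using o unfolding tax_opt_def by auto
  have ox: "exp(-as)*qs = X" "tax_obj p0 p1 g P i qs as = V" using u[OF o] by auto
  have X0: "X \<ge> 0" using t unfolding X_def by simp
  have mopt: "mar_opt p0 p1 g lam P i qs as X"
    unfolding mar_opt_def using oqa X0 mle le meq[of qs as] ox by (metis order_trans)
  have mu: "exp(-a)*q = X \<and> mar_obj p0 p1 g lam P i q a d = V" if mo: "mar_opt p0 p1 g lam P i q a d" for q a d
  proof -
    have qa: "q \<ge> 0" "a \<ge> 0" "d \<ge> 0" using mo unfolding mar_opt_def by auto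
    have "mar_obj p0 p1 g lam P i q a d \<ge> mar_obj p0 p1 g lam P i qs as X"
      using mo oqa X0 unfolding mar_opt_def by blast
    then have ge: "mar_obj p0 p1 g lam P i q a d \<ge> V" using meq[of qs as] ox by simp
    have t1: "tax_obj p0 p1 g P i q a \<ge> V" using ge mle[OF qa(3), of q a] by linarith
    have "tax_opt p0 p1 g P i q a" unfolding tax_opt_def using qa t1 le by (meson order_trans)
    then have "exp(-a)*q = X" using u by blast
    moreover have "mar_obj p0 p1 g lam P i q a d = V" using ge mle[OF qa(3), of q a] le[of q a] by linarith
    ultimately show ?thesis by simp
  qed
  show "Emar p0 p1 g lam P i = Ebau p0 p1 i - P * rho p1 g i"
    unfolding Emar_def X_def[symmetric]
  proof (rule the_equality)
    show "\<exists>q a d. mar_opt p0 p1 g lam P i q a d \<and> X = exp (- a) * q" using mopt ox by metis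
    show "\<And>e. \<exists>q a d. mar_opt p0 p1 g lam P i q a d \<and> e = exp (- a) * q \<Longrightarrow> e = X" using mu by metis
  qed
  show "WmarC p0 p1 g lam P i = WbauC p0 p1 i - P * (Ebau p0 p1 i - P/2 * rho p1 g i)"
    unfolding WmarC_def v[symmetric]
  proof (rule the_equality)
    show "\<exists>q a d. mar_opt p0 p1 g lam P i q a d \<and> V = mar_obj p0 p1 g lam P i q a d" using mopt mu by metis
    show "\<And>w. \<exists>q a d. mar_opt p0 p1 g lam P i q a d \<and> w = mar_obj p0 p1 g lam P i q a d \<Longrightarrow> w = V" using mu by metis
  qed
qed

lemma Pint_min:
  assumes r: "rho p1 g b > 0" and S: "S \<le> lam" and l: "lam * rho p1 g b < Ebau p0 p1 b"
  shows "Pint p0 p1 g lam S b = min ((Ebau p0 p1 b / rho p1 g b + S)/2) lam"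
proof -
  define E where "E = Ebau p0 p1 b"
  define rr where "rr = rho p1 g b"
  define Ps where "Ps = (E/rr + S)/2"
  define P0 where "P0 = min Ps lam"
  have lE: "lam < E/rr" using l r unfolding E_def rr_def by (simp add: field_simps)
  have SP: "S \<le> Ps" unfolding Ps_def using lE S by simp
  have id: "demand p0 p1 g P b * (P - S) = rr * ((E/rr - S)/2)^2 - rr * (P - Ps)^2" for P
    unfolding demand_def E_def[symmetric] rr_def[symmetric] Ps_def using r unfolding rr_def[symmetric]
    by (simp add: field_simps power2_eq_square)
  have P0r: "S \<le> P0" "P0 \<le> lam" unfolding P0_def using SP S by auto
  have sq: "(P0 - Ps)^2 \<le> (P - Ps)^2" if "S \<le> P" "P \<le> lam" for P
  proof (cases "Ps \<le> lam")
    case True then show ?thesis unfolding P0_def by simp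
  next
    case False
    then have "0 \<le> Ps - lam" "Ps - lam \<le> Ps - P" using that by auto
    then have "(Ps - lam)^2 \<le> (Ps - P)^2" by (simp add: power_mono)
    then show ?thesis using False unfolding P0_def by (simp add: power2_commute)
  qed
  have r0: "rr > 0" using r unfolding rr_def .
  show ?thesis unfolding Pint_def E_def[symmetric] rr_def[symmetric] Ps_def[symmetric] P0_def[symmetric]
  proof (rule the_equality)
    show "S \<le> P0 \<and> P0 \<le> lam \<and> (\<forall>P'. S \<le> P' \<and> P' \<le> lam \<longrightarrow> demand p0 p1 g P' b * (P' - S) \<le> demand p0 p1 g P0 b * (P0 - S))"
      using P0r sq r0 unfolding id by (auto intro: mult_left_mono)
    fix P assume h: "S \<le> P \<and> P \<le> lam \<and> (\<forall>P'. S \<le> P' \<and> P' \<le> lam \<longrightarrow> demand p0 p1 g P' b * (P' - S) \<le> demand p0 p1 g P b * (P - S))"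
    then have "rr * (P - Ps)^2 \<le> rr * (P0 - Ps)^2" using P0r unfolding id by auto
    then have "(P - Ps)^2 \<le> (P0 - Ps)^2" using r0 by simp
    then have eq: "(P - Ps)^2 = (P0 - Ps)^2" using sq h by (meson antisym)
    show "P = P0"
    proof (cases "Ps \<le> lam")
      case True then show ?thesis using eq unfolding P0_def by simp
    next
      case False
      then have "P0 = lam" unfolding P0_def by simp
      then have "\<bar>P - Ps\<bar> = \<bar>lam - Ps\<bar>" using eq by (metis power2_eq_iff_nonneg abs_ge_zero power2_abs)
      then show ?thesis using False h \<open>P0 = lam\<close> by auto
    qed
  qed
qed

lemma alg_c:
  fixes R S SD tau Wb E r :: real
  assumes "R > 0" "tau = S + SD/R"
  shows "Wb - S*(E - S/2*r) = (Wb - tau*(E - tau/2*r)) + ((E - tau*r) + (E - S*r))/(2*R)*SD"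
  using assms(1) unfolding assms(2) by (simp add: field_simps power2_eq_square)

lemma alg_b:
  fixes R S SD tau Wb E r :: real
  assumes "R > 0" "r > 0" "tau = S + SD/R"
  shows "Wb - ((E/r + S)/2)*(E - ((E/r + S)/2)/2*r) = (Wb - tau*(E - tau/2*r)) + ((E - tau*r) + (E - S*r)/2)/(2*R)*SD
     - 3/2 * (((E - S*r)/2)^2/r) + ((E - S*r)/2)/(2*R)*SD"
  using assms(1,2) unfolding assms(3) by (simp add: field_simps power2_eq_square)

lemma alg_sum:
  fixes R A SD a1 a2 b1 :: real
  assumes "R > 0" "a1 + a2 = A" "b1 + SD = A"
  shows "(a1 + b1)/(2*R)*SD + (a2 + SD)/(2*R)*SD + SD/(2*R)*SD = A/R*SD + SD^2/(2*R)"
proof -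
  have e1: "a2 = A - a1" and e2: "b1 = A - SD" using assms by auto
  show ?thesis using assms(1) unfolding e1 e2 by (simp add: field_simps power2_eq_square)
qed




theorem theoremB1:
  fixes Cs Bs :: "'i set"
    and p0 p1 g :: "'i \<Rightarrow> real"
    and tau lam A S :: real
  assumes fin: "finite Cs" "finite Bs"
    and disj: "Cs \<inter> Bs = {}"
    and hybrid: "Cs \<noteq> {}" "Bs \<noteq> {}"
    and params: "\<forall>i\<in>Cs \<union> Bs. 0 < p0 i \<and> 0 < p1 i \<and> 0 < g i"
    and standing: "\<forall>i\<in>Cs \<union> Bs. tau * rho p1 g i < Ebau p0 p1 i \<and> lam * rho p1 g i < Ebau p0 p1 i"
    and eq: "is_equilibrium Cs Bs p0 p1 g lam A S"
    and S_range: "0 \<le> S" "S \<le> lam"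
    and tax_emis: "(\<Sum>i\<in>Cs \<union> Bs. Etax p0 p1 g tau i) = A"
    and mar_emis: "(\<Sum>i\<in>Cs \<union> Bs. Emar p0 p1 g lam (Pface Bs p0 p1 g lam S i) i) = A"
    and lower: "(Max ((\<lambda>b. Ebau p0 p1 b / rho p1 g b) ` Bs) - 2 * lam)
                  * ((\<Sum>c\<in>Cs. rho p1 g c) + 1/2 * (\<Sum>b\<in>Bs. rho p1 g b))
                + (\<Sum>c\<in>Cs. Ebau p0 p1 c) + 1/2 * (\<Sum>b\<in>Bs. Ebau p0 p1 b) \<le> A"
    and upper: "A < (\<Sum>c\<in>Cs. Ebau p0 p1 c)
                  + (\<Sum>b\<in>Bs. max (Ebau p0 p1 b / 2) (Ebau p0 p1 b - lam * rho p1 g b))"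
  shows
    \<comment> \<open>Tax scheme\<close>
    "tau = ((\<Sum>i\<in>Cs \<union> Bs. Ebau p0 p1 i) - A) / (\<Sum>i\<in>Cs \<union> Bs. rho p1 g i)
     \<and> (\<forall>i\<in>Cs \<union> Bs. WtaxC p0 p1 g tau i
            = WbauC p0 p1 i - tau * (Ebau p0 p1 i - tau / 2 * rho p1 g i))
     \<and> (\<Sum>i\<in>Cs \<union> Bs. WtaxC p0 p1 g tau i)
            = (\<Sum>i\<in>Cs \<union> Bs. WbauC p0 p1 i)
              - tau * ((\<Sum>i\<in>Cs \<union> Bs. Ebau p0 p1 i) - tau / 2 * (\<Sum>i\<in>Cs \<union> Bs. rho p1 g i))
     \<and> WtaxR (Cs \<union> Bs) p0 p1 g tau = tau * A
     \<comment> \<open>Market scheme: direct buyers\<close>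
     \<and> (\<forall>c\<in>Cs. Pface Bs p0 p1 g lam S c = S
          \<and> S = (2 * (\<Sum>i\<in>Cs \<union> Bs. rho p1 g i) * tau - (\<Sum>b\<in>Bs. Ebau p0 p1 b))
                / (2 * (\<Sum>i\<in>Cs \<union> Bs. rho p1 g i) - (\<Sum>b\<in>Bs. rho p1 g b))
          \<and> WmarC p0 p1 g lam S c
              = WtaxC p0 p1 g tau c
                + (Etax p0 p1 g tau c + Emar p0 p1 g lam S c) / (2 * (\<Sum>i\<in>Cs \<union> Bs. rho p1 g i))
                  * (\<Sum>b\<in>Bs. Emar p0 p1 g lam (Pint p0 p1 g lam S b) b))
     \<comment> \<open>Market scheme: companies buying through intermediaries\<close>
     \<and> (\<forall>b\<in>Bs. Pint p0 p1 g lam S b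
              = tau / 2 + 1/2 * (Ebau p0 p1 b / rho p1 g b
                  - 1 / (\<Sum>i\<in>Cs \<union> Bs. rho p1 g i)
                    * (\<Sum>\<beta>\<in>Bs. Emar p0 p1 g lam (Pint p0 p1 g lam S \<beta>) \<beta>))
          \<and> WmarF p0 p1 g lam S b = (Emar p0 p1 g lam (Pint p0 p1 g lam S b) b)^2 / rho p1 g b
          \<and> WmarC p0 p1 g lam (Pint p0 p1 g lam S b) b
              = WtaxC p0 p1 g tau b
                + (Etax p0 p1 g tau b + Emar p0 p1 g lam (Pint p0 p1 g lam S b) b)
                    / (2 * (\<Sum>i\<in>Cs \<union> Bs. rho p1 g i))
                  * (\<Sum>\<beta>\<in>Bs. Emar p0 p1 g lam (Pint p0 p1 g lam S \<beta>) \<beta>)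
                - 3/2 * WmarF p0 p1 g lam S b
                + Emar p0 p1 g lam (Pint p0 p1 g lam S b) b / (2 * (\<Sum>i\<in>Cs \<union> Bs. rho p1 g i))
                  * (\<Sum>\<beta>\<in>Bs. Emar p0 p1 g lam (Pint p0 p1 g lam S \<beta>) \<beta>))
     \<comment> \<open>Aggregates\<close>
     \<and> (\<Sum>b\<in>Bs. WmarF p0 p1 g lam S b)
          = (\<Sum>b\<in>Bs. (Emar p0 p1 g lam (Pint p0 p1 g lam S b) b)^2 / rho p1 g b)
     \<and> (\<Sum>i\<in>Cs \<union> Bs. WmarC p0 p1 g lam (Pface Bs p0 p1 g lam S i) i)
          = (\<Sum>i\<in>Cs \<union> Bs. WtaxC p0 p1 g tau i)
            - 3/2 * (\<Sum>b\<in>Bs. WmarF p0 p1 g lam S b)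
            + A / (\<Sum>i\<in>Cs \<union> Bs. rho p1 g i) * (\<Sum>b\<in>Bs. Emar p0 p1 g lam (Pint p0 p1 g lam S b) b)
            + (\<Sum>b\<in>Bs. Emar p0 p1 g lam (Pint p0 p1 g lam S b) b)^2 / (2 * (\<Sum>i\<in>Cs \<union> Bs. rho p1 g i))
     \<and> WmarR (Cs \<union> Bs) Bs p0 p1 g lam A S
          = WtaxR (Cs \<union> Bs) p0 p1 g tau
            - A / (\<Sum>i\<in>Cs \<union> Bs. rho p1 g i) * (\<Sum>b\<in>Bs. Emar p0 p1 g lam (Pint p0 p1 g lam S b) b)"
proof -
  define E where "E = Ebau p0 p1"
  define r where "r = rho p1 g"
  define Et where "Et = Etax p0 p1 g tau"
  define Em where "Em = Emar p0 p1 g lam"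
  define PB where "PB = Pint p0 p1 g lam S"
  define Wt where "Wt = WtaxC p0 p1 g tau"
  define Wm where "Wm = WmarC p0 p1 g lam"
  define WF where "WF = WmarF p0 p1 g lam S"
  define Wb where "Wb = WbauC p0 p1"
  define Pf where "Pf = Pface Bs p0 p1 g lam S"
  define R where "R = (\<Sum>i\<in>Cs \<union> Bs. r i)"
  define RC where "RC = (\<Sum>i\<in>Cs. r i)"
  define RB where "RB = (\<Sum>i\<in>Bs. r i)"
  define ET where "ET = (\<Sum>i\<in>Cs \<union> Bs. E i)"
  define EC where "EC = (\<Sum>i\<in>Cs. E i)"
  define EB where "EB = (\<Sum>i\<in>Bs. E i)"
  define SD where "SD = (\<Sum>b\<in>Bs. Em (PB b) b)"
  define M where "M = Max ((\<lambda>b. E b / r b) ` Bs)"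
  have finI: "finite (Cs \<union> Bs)" using fin by simp
  have pp: "\<And>i. i \<in> Cs \<union> Bs \<Longrightarrow> 0 < p0 i \<and> 0 < p1 i \<and> 0 < g i" using params by blast
  have st: "\<And>i. i \<in> Cs \<union> Bs \<Longrightarrow> tau * r i < E i \<and> lam * r i < E i"
    using standing unfolding E_def r_def by blast
  have rpos: "\<And>i. i \<in> Cs \<union> Bs \<Longrightarrow> r i > 0"
  proof -
    fix i assume "i \<in> Cs \<union> Bs"
    then have "0 < p1 i" "0 < g i" using pp by auto
    then show "r i > 0" unfolding r_def rho_def by (simp add: add_pos_pos)
  qed
  have Epos: "\<And>i. i \<in> Cs \<union> Bs \<Longrightarrow> E i > 0" using pp unfolding E_def Ebau_def by auto
  have lam0: "lam \<ge> 0" using S_range by simp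
  have R_split: "R = RC + RB" unfolding R_def RC_def RB_def using fin disj by (simp add: sum.union_disjoint)
  have E_split: "ET = EC + EB" unfolding ET_def EC_def EB_def using fin disj by (simp add: sum.union_disjoint)
  have RCpos: "RC > 0" unfolding RC_def using fin hybrid rpos by (intro sum_pos) auto
  have RBnn: "RB \<ge> 0" unfolding RB_def using rpos by (intro sum_nonneg) (auto intro: less_imp_le)
  have Rpos: "R > 0" using R_split RCpos RBnn by linarith
  have dem: "\<And>P i. demand p0 p1 g P i = E i - P * r i" unfolding demand_def E_def r_def by simp
  have "(\<Sum>b\<in>Bs. max (E b / 2) (E b - lam * r b)) \<le> EB"
    unfolding EB_def
  proof (rule sum_mono)
    fix b assume "b \<in> Bs"
    then have "E b > 0" "r b > 0" using Epos rpos by auto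
    then show "max (E b / 2) (E b - lam * r b) \<le> E b" using lam0 by (simp add: mult_nonneg_nonneg)
  qed
  then have AET: "A < ET" using upper E_split unfolding EC_def E_def r_def by simp
  have taupos: "tau > 0"
  proof (rule ccontr)
    assume "\<not> tau > 0"
    then have t0: "tau \<le> 0" by simp
    have "ET \<le> (\<Sum>i\<in>Cs \<union> Bs. Etax p0 p1 g tau i)" unfolding ET_def
    proof (rule sum_mono)
      fix i assume i: "i \<in> Cs \<union> Bs"
      have "Etax p0 p1 g tau i = Ebau p0 p1 i - tau / p1 i" using tax_neg_val[of p0 i p1 g tau] pp[OF i] t0 by simp
      moreover have "tau / p1 i \<le> 0" using t0 pp[OF i] by (simp add: divide_nonpos_pos)
      ultimately show "E i \<le> Etax p0 p1 g tau i" unfolding E_def by simp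
    qed
    then show False using tax_emis AET by simp
  qed
  have Etv: "\<And>i. i \<in> Cs \<union> Bs \<Longrightarrow> Et i = E i - tau * r i"
  proof -
    fix i assume i: "i \<in> Cs \<union> Bs"
    show "Et i = E i - tau * r i"
      using tax_pos_vals(1)[of p0 i p1 g tau] pp[OF i] st[OF i] taupos unfolding Et_def E_def r_def by simp
  qed
  have Wtv: "\<And>i. i \<in> Cs \<union> Bs \<Longrightarrow> Wt i = Wb i - tau * (E i - tau/2 * r i)"
  proof -
    fix i assume i: "i \<in> Cs \<union> Bs"
    show "Wt i = Wb i - tau * (E i - tau/2 * r i)"
      using tax_pos_vals(2)[of p0 i p1 g tau] pp[OF i] st[OF i] taupos unfolding Wt_def Wb_def E_def r_def by simp
  qed
  have sumEt: "(\<Sum>i\<in>Cs \<union> Bs. Et i) = A" using tax_emis unfolding Et_def .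
  have "(\<Sum>i\<in>Cs \<union> Bs. Et i) = ET - tau * R"
    using Etv unfolding ET_def R_def by (simp add: sum_subtractf sum_distrib_left)
  then have tauR: "tau * R = ET - A" using sumEt by simp
  have PBmin: "\<And>b. b \<in> Bs \<Longrightarrow> PB b = min ((E b / r b + S)/2) lam"
  proof -
    fix b assume b: "b \<in> Bs"
    show "PB b = min ((E b / r b + S)/2) lam"
      using Pint_min[of p1 g b S lam p0] rpos[of b] st[of b] S_range b unfolding PB_def E_def r_def by simp
  qed
  have Mge: "\<And>b. b \<in> Bs \<Longrightarrow> E b / r b \<le> M" unfolding M_def using fin(2) by (intro Max_ge) auto
  have lower': "(M - 2*lam)*(RC + 1/2*RB) + EC + 1/2*EB \<le> A"
    using lower unfolding M_def RC_def RB_def EC_def EB_def E_def r_def .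
  have eq': "A = (\<Sum>c\<in>Cs. E c - S * r c) + (\<Sum>b\<in>Bs. E b - PB b * r b)"
    using eq unfolding is_equilibrium_def dem PB_def .
  have Sle: "S \<le> 2*lam - M"
  proof (rule ccontr)
    define S1 where "S1 = 2*lam - M"
    assume "\<not> S \<le> 2*lam - M"
    then have SS1: "S1 < S" unfolding S1_def by simp
    have "(\<Sum>c\<in>Cs. E c - S * r c) < (\<Sum>c\<in>Cs. E c - S1 * r c)"
    proof (rule sum_strict_mono[OF fin(1) hybrid(1)])
      fix c assume "c \<in> Cs"
      then have "r c > 0" using rpos by auto
      then show "E c - S * r c < E c - S1 * r c" using SS1 by simp
    qed
    moreover have "(\<Sum>b\<in>Bs. E b - PB b * r b) \<le> (\<Sum>b\<in>Bs. (E b - S1 * r b)/2)"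
    proof (rule sum_mono)
      fix b assume b: "b \<in> Bs"
      have rb: "r b > 0" using rpos b by auto
      have "(E b / r b + S1)/2 \<le> PB b" unfolding PBmin[OF b] using Mge[OF b] SS1 unfolding S1_def by simp
      then have "(E b / r b + S1)/2 * r b \<le> PB b * r b" using rb by (simp add: mult_right_mono)
      moreover have "(E b / r b + S1)/2 * r b = (E b + S1 * r b)/2" using rb by (simp add: field_simps)
      ultimately show "E b - PB b * r b \<le> (E b - S1 * r b)/2" by simp
    qed
    moreover have "(\<Sum>c\<in>Cs. E c - S1 * r c) = EC - S1 * RC"
      unfolding EC_def RC_def by (simp add: sum_subtractf sum_distrib_left)
    moreover have "(\<Sum>b\<in>Bs. (E b - S1 * r b)/2) = (EB - S1 * RB)/2"
      unfolding EB_def RB_def by (simp add: sum_subtractf sum_distrib_left flip: sum_divide_distrib)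
    moreover have "(M - 2*lam)*(RC + 1/2*RB) + EC + 1/2*EB = EC - S1*RC + (EB - S1*RB)/2"
      unfolding S1_def by (simp add: field_simps)
    ultimately show False using eq' lower' by linarith
  qed
  have PBv: "\<And>b. b \<in> Bs \<Longrightarrow> PB b = (E b / r b + S)/2"
  proof -
    fix b assume b: "b \<in> Bs"
    have "(E b / r b + S)/2 \<le> lam" using Mge[OF b] Sle by simp
    then show "PB b = (E b / r b + S)/2" using PBmin[OF b] by simp
  qed
  have PBr: "\<And>b. b \<in> Bs \<Longrightarrow> 0 \<le> PB b \<and> PB b \<le> lam \<and> PB b * r b < E b"
  proof -
    fix b assume b: "b \<in> Bs"
    have rb: "r b > 0" and l: "lam * r b < E b" using rpos st b by auto
    then have "lam < E b / r b" by (simp add: field_simps)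
    then have "S \<le> PB b" "PB b \<le> lam" using PBmin[OF b] S_range by auto
    moreover have "PB b * r b \<le> lam * r b" using \<open>PB b \<le> lam\<close> rb by (simp add: mult_right_mono)
    ultimately show "0 \<le> PB b \<and> PB b \<le> lam \<and> PB b * r b < E b" using l S_range by linarith
  qed
  have Emb: "\<And>b. b \<in> Bs \<Longrightarrow> Em (PB b) b = (E b - S * r b)/2"
  proof -
    fix b assume b: "b \<in> Bs"
    have "Em (PB b) b = E b - PB b * r b"
      using mar_vals(1)[of p0 b p1 g "PB b" lam] pp[of b] PBr[OF b] b unfolding Em_def E_def r_def by simp
    also have "\<dots> = (E b - S * r b)/2" unfolding PBv[OF b] using rpos[of b] b by (simp add: field_simps)
    finally show "Em (PB b) b = (E b - S * r b)/2" .
  qed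
  have Wmb: "\<And>b. b \<in> Bs \<Longrightarrow> Wm (PB b) b = Wb b - PB b * (E b - PB b/2 * r b)"
  proof -
    fix b assume b: "b \<in> Bs"
    show "Wm (PB b) b = Wb b - PB b * (E b - PB b/2 * r b)"
      using mar_vals(2)[of p0 b p1 g "PB b" lam] pp[of b] PBr[OF b] b unfolding Wm_def Wb_def E_def r_def by simp
  qed
  have Sc: "\<And>c. c \<in> Cs \<Longrightarrow> S * r c < E c"
  proof -
    fix c assume c: "c \<in> Cs"
    have "S * r c \<le> lam * r c" using S_range rpos[of c] c by (simp add: mult_right_mono)
    then show "S * r c < E c" using st[of c] c by auto
  qed
  have Emc: "\<And>c. c \<in> Cs \<Longrightarrow> Em S c = E c - S * r c"
  proof -
    fix c assume c: "c \<in> Cs"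
    then have "0 < p0 c \<and> 0 < p1 c \<and> 0 < g c" using pp by blast
    then show "Em S c = E c - S * r c"
      using mar_vals(1)[of p0 c p1 g S lam] Sc[OF c] S_range unfolding Em_def E_def r_def by simp
  qed
  have Wmc: "\<And>c. c \<in> Cs \<Longrightarrow> Wm S c = Wb c - S * (E c - S/2 * r c)"
  proof -
    fix c assume c: "c \<in> Cs"
    then have "0 < p0 c \<and> 0 < p1 c \<and> 0 < g c" using pp by blast
    then show "Wm S c = Wb c - S * (E c - S/2 * r c)"
      using mar_vals(2)[of p0 c p1 g S lam] Sc[OF c] S_range unfolding Wm_def Wb_def E_def r_def by simp
  qed
  have Pfc: "\<And>c. c \<in> Cs \<Longrightarrow> Pf c = S" unfolding Pf_def Pface_def using disj by auto
  have Pfb: "\<And>b. b \<in> Bs \<Longrightarrow> Pf b = PB b" unfolding Pf_def Pface_def PB_def by auto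
  have SDv: "SD = (EB - S * RB)/2"
  proof -
    have "SD = (\<Sum>b\<in>Bs. (E b - S * r b)/2)" unfolding SD_def using Emb by (rule sum.cong[OF refl])
    also have "\<dots> = (EB - S * RB)/2"
      unfolding EB_def RB_def by (simp add: sum_subtractf sum_distrib_left flip: sum_divide_distrib)
    finally show ?thesis .
  qed
  have eq2: "A = (EC - S * RC) + (EB - S * RB)/2"
  proof -
    have "(\<Sum>c\<in>Cs. E c - S * r c) = EC - S * RC"
      unfolding EC_def RC_def by (simp add: sum_subtractf sum_distrib_left)
    moreover have "(\<Sum>b\<in>Bs. E b - PB b * r b) = (\<Sum>b\<in>Bs. (E b - S * r b)/2)"
    proof (rule sum.cong)
      fix b assume b: "b \<in> Bs"
      show "E b - PB b * r b = (E b - S * r b)/2" unfolding PBv[OF b] using rpos[of b] b by (simp add: field_simps)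
    qed simp
    moreover have "(\<Sum>b\<in>Bs. (E b - S * r b)/2) = (EB - S * RB)/2"
      unfolding EB_def RB_def by (simp add: sum_subtractf sum_distrib_left flip: sum_divide_distrib)
    ultimately show ?thesis using eq' by simp
  qed
  have SRs: "S * R = S * RC + S * RB" using R_split by (simp add: distrib_left)
  have tauR2: "tau * R = S * R + SD" unfolding tauR E_split eq2 SRs SDv by (simp add: field_simps)
  have tauS: "tau = S + SD / R" using tauR2 Rpos by (simp add: field_simps)
  have c1: "tau = (ET - A)/R" using tauR Rpos by (simp add: field_simps)
  have c2: "\<forall>i\<in>Cs \<union> Bs. Wt i = Wb i - tau * (E i - tau / 2 * r i)" using Wtv by blast
  have c3: "(\<Sum>i\<in>Cs \<union> Bs. Wt i) = (\<Sum>i\<in>Cs \<union> Bs. Wb i) - tau * (ET - tau / 2 * R)"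
  proof -
    have "(\<Sum>i\<in>Cs \<union> Bs. Wt i) = (\<Sum>i\<in>Cs \<union> Bs. Wb i - (tau * E i - (tau * tau / 2) * r i))"
      by (rule sum.cong[OF refl]) (simp add: Wtv algebra_simps)
    also have "\<dots> = (\<Sum>i\<in>Cs \<union> Bs. Wb i) - (tau * ET - (tau * tau / 2) * R)"
      unfolding ET_def R_def by (simp add: sum_subtractf sum_distrib_left)
    finally show ?thesis by (simp add: algebra_simps)
  qed
  have c4: "WtaxR (Cs \<union> Bs) p0 p1 g tau = tau * A" unfolding WtaxR_def using tax_emis by simp
  have RBR: "2 * R - RB > 0" using R_split RCpos RBnn by linarith
  have Sform: "S = (2 * R * tau - EB) / (2 * R - RB)"
  proof -
    have "S * (2 * R - RB) = 2 * (S * R) - S * RB" by (simp add: algebra_simps)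
    also have "\<dots> = 2 * (tau * R - SD) - S * RB" using tauR2 by simp
    also have "\<dots> = 2 * R * tau - EB" unfolding SDv by (simp add: field_simps)
    finally have "S * (2 * R - RB) = 2 * R * tau - EB" .
    then show ?thesis using RBR by (simp add: field_simps)
  qed
  have c5: "\<forall>c\<in>Cs. Pf c = S \<and> S = (2 * R * tau - EB) / (2 * R - RB)
      \<and> Wm S c = Wt c + (Et c + Em S c) / (2 * R) * SD"
  proof
    fix c assume c: "c \<in> Cs"
    then have ci: "c \<in> Cs \<union> Bs" by simp
    have "Wm S c = Wt c + (Et c + Em S c) / (2 * R) * SD"
      unfolding Wmc[OF c] Wtv[OF ci] Etv[OF ci] Emc[OF c] by (rule alg_c[OF Rpos tauS])
    then show "Pf c = S \<and> S = (2 * R * tau - EB) / (2 * R - RB) \<and> Wm S c = Wt c + (Et c + Em S c) / (2 * R) * SD"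
      using Pfc[OF c] Sform by simp
  qed
  have WFv: "\<And>b. b \<in> Bs \<Longrightarrow> WF b = (Em (PB b) b)^2 / r b"
  proof -
    fix b assume b: "b \<in> Bs"
    have rb: "r b > 0" using rpos b by auto
    have "WF b = (E b - PB b * r b) * (PB b - S)" unfolding WF_def WmarF_def dem PB_def ..
    also have "\<dots> = ((E b - S * r b)/2)^2 / r b" unfolding PBv[OF b] using rb
      by (simp add: field_simps power2_eq_square)
    finally show "WF b = (Em (PB b) b)^2 / r b" unfolding Emb[OF b] .
  qed
  have c6: "\<forall>b\<in>Bs. PB b = tau / 2 + 1/2 * (E b / r b - 1 / R * SD)
      \<and> WF b = (Em (PB b) b)^2 / r b
      \<and> Wm (PB b) b = Wt b + (Et b + Em (PB b) b) / (2 * R) * SD - 3/2 * WF b + Em (PB b) b / (2 * R) * SD"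
  proof
    fix b assume b: "b \<in> Bs"
    then have bi: "b \<in> Cs \<union> Bs" by simp
    have rb: "r b > 0" using rpos b by auto
    have p1: "PB b = tau / 2 + 1/2 * (E b / r b - 1 / R * SD)" unfolding PBv[OF b] tauS by (simp add: field_simps)
    have p3: "Wm (PB b) b = Wt b + (Et b + Em (PB b) b) / (2 * R) * SD - 3/2 * WF b + Em (PB b) b / (2 * R) * SD"
      unfolding Wmb[OF b] WFv[OF b] Wtv[OF bi] Etv[OF bi] unfolding Emb[OF b] unfolding PBv[OF b] by (rule alg_b[OF Rpos rb tauS])
    show "PB b = tau / 2 + 1/2 * (E b / r b - 1 / R * SD)
      \<and> WF b = (Em (PB b) b)^2 / r b
      \<and> Wm (PB b) b = Wt b + (Et b + Em (PB b) b) / (2 * R) * SD - 3/2 * WF b + Em (PB b) b / (2 * R) * SD"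
      using p1 WFv[OF b] p3 by simp
  qed
  have c7: "(\<Sum>b\<in>Bs. WF b) = (\<Sum>b\<in>Bs. (Em (PB b) b)^2 / r b)" using WFv by (rule sum.cong[OF refl])
  have spl: "\<And>f. (\<Sum>i\<in>Cs \<union> Bs. f i) = (\<Sum>i\<in>Cs. f i) + (\<Sum>i\<in>Bs. f i)"
    using fin disj by (simp add: sum.union_disjoint)
  have sC: "(\<Sum>c\<in>Cs. Wm (Pf c) c) = (\<Sum>c\<in>Cs. Wt c) + ((\<Sum>c\<in>Cs. Et c) + (\<Sum>c\<in>Cs. Em S c)) / (2 * R) * SD"
  proof -
    have "(\<Sum>c\<in>Cs. Wm (Pf c) c) = (\<Sum>c\<in>Cs. Wt c + (Et c + Em S c) / (2 * R) * SD)"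
      by (rule sum.cong[OF refl]) (use c5 in auto)
    also have "\<dots> = (\<Sum>c\<in>Cs. Wt c) + ((\<Sum>c\<in>Cs. Et c) + (\<Sum>c\<in>Cs. Em S c)) / (2 * R) * SD"
      by (simp add: sum.distrib flip: sum_distrib_right sum_divide_distrib)
    finally show ?thesis .
  qed
  have sB: "(\<Sum>b\<in>Bs. Wm (Pf b) b) = (\<Sum>b\<in>Bs. Wt b) + ((\<Sum>b\<in>Bs. Et b) + SD) / (2 * R) * SD
      - 3/2 * (\<Sum>b\<in>Bs. WF b) + SD / (2 * R) * SD"
  proof -
    have "(\<Sum>b\<in>Bs. Wm (Pf b) b) = (\<Sum>b\<in>Bs. Wt b + (Et b + Em (PB b) b) / (2 * R) * SD - 3/2 * WF b + Em (PB b) b / (2 * R) * SD)"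
      by (rule sum.cong[OF refl]) (use c6 Pfb in auto)
    also have "\<dots> = (\<Sum>b\<in>Bs. Wt b) + ((\<Sum>b\<in>Bs. Et b) + SD) / (2 * R) * SD
      - 3/2 * (\<Sum>b\<in>Bs. WF b) + SD / (2 * R) * SD"
      unfolding SD_def by (simp add: sum.distrib sum_subtractf flip: sum_distrib_right sum_divide_distrib sum_distrib_left)
    finally show ?thesis .
  qed
  have mE: "(\<Sum>c\<in>Cs. Em S c) + SD = A"
  proof -
    have "(\<Sum>i\<in>Cs \<union> Bs. Em (Pf i) i) = A" using mar_emis unfolding Em_def Pf_def .
    moreover have "(\<Sum>c\<in>Cs. Em (Pf c) c) = (\<Sum>c\<in>Cs. Em S c)" using Pfc by simp
    moreover have "(\<Sum>b\<in>Bs. Em (Pf b) b) = SD" unfolding SD_def using Pfb by simp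
    ultimately show ?thesis using spl by metis
  qed
  have tE: "(\<Sum>c\<in>Cs. Et c) + (\<Sum>b\<in>Bs. Et b) = A" using sumEt spl by metis
  have c8: "(\<Sum>i\<in>Cs \<union> Bs. Wm (Pf i) i) = (\<Sum>i\<in>Cs \<union> Bs. Wt i) - 3/2 * (\<Sum>b\<in>Bs. WF b)
      + A / R * SD + SD^2 / (2 * R)"
  proof -
    have "(\<Sum>i\<in>Cs \<union> Bs. Wm (Pf i) i) = (\<Sum>c\<in>Cs. Wm (Pf c) c) + (\<Sum>b\<in>Bs. Wm (Pf b) b)" by (rule spl)
    also have "\<dots> = ((\<Sum>c\<in>Cs. Wt c) + (\<Sum>b\<in>Bs. Wt b)) - 3/2 * (\<Sum>b\<in>Bs. WF b)
       + (((\<Sum>c\<in>Cs. Et c) + (\<Sum>c\<in>Cs. Em S c)) / (2 * R) * SD + ((\<Sum>b\<in>Bs. Et b) + SD) / (2 * R) * SD + SD / (2 * R) * SD)"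
      unfolding sC sB by simp
    also have "((\<Sum>c\<in>Cs. Et c) + (\<Sum>c\<in>Cs. Em S c)) / (2 * R) * SD + ((\<Sum>b\<in>Bs. Et b) + SD) / (2 * R) * SD + SD / (2 * R) * SD
        = A / R * SD + SD^2 / (2 * R)"
      using alg_sum[OF Rpos tE mE] .
    finally show ?thesis using spl[of Wt] by simp
  qed
  have c9: "WmarR (Cs \<union> Bs) Bs p0 p1 g lam A S = WtaxR (Cs \<union> Bs) p0 p1 g tau - A / R * SD"
  proof -
    have z: "(\<Sum>i\<in>Cs \<union> Bs. max (Em (Pf i) i - demand p0 p1 g (Pf i) i) 0) = 0"
    proof (rule sum.neutral, rule ballI)
      fix i assume i: "i \<in> Cs \<union> Bs"
      show "max (Em (Pf i) i - demand p0 p1 g (Pf i) i) 0 = 0"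
      proof (cases "i \<in> Bs")
        case True
        have rb: "r i > 0" using rpos i by auto
        show ?thesis unfolding Pfb[OF True] dem unfolding Emb[OF True] unfolding PBv[OF True] using rb by (simp add: field_simps)
      next
        case False
        then have c: "i \<in> Cs" using i by simp
        show ?thesis unfolding Pfc[OF c] dem Emc[OF c] by simp
      qed
    qed
    have "WmarR (Cs \<union> Bs) Bs p0 p1 g lam A S = S * A"
      using z unfolding WmarR_def Em_def Pf_def by simp
    then show ?thesis unfolding c4 using tauS by (simp add: algebra_simps)
  qed
  show ?thesis
    unfolding E_def[symmetric] r_def[symmetric] Et_def[symmetric] Em_def[symmetric] PB_def[symmetric]
      Wt_def[symmetric] Wm_def[symmetric] WF_def[symmetric] Wb_def[symmetric] Pf_def[symmetric]
    unfolding R_def[symmetric] RB_def[symmetric] ET_def[symmetric] EB_def[symmetric] SD_def[symmetric]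
    using c1 c2 c3 c4 c5 c6 c7 c8 c9 by blast
qed


end
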